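(* Let $S$ be a complete metric space with distance $d$, and let $\preceq$ be a topological orientation on $S$. Assume that every right-bounded pair in $S$ has a join, and that $h:S\to\mathbb{R}$ is continuous and a discriminator. Then $(S,\preceq)$ is a cc sponge.
   Context: An orientation on $S$ is a reflexive, antisymmetric binary relation $\preceq$; it is a topological orientation if $\preceq$ is a closed subset of $S\times S$. For $P\subseteq S$: $P$ is right-bounded if some $s\in S$ has $p\preceq s$ for all $p\in P$. The join of $P$ is an element $x$ with $p\preceq x$ for all $p\in P$ and $x\preceq y$ for every $y$ with $p\preceq y$ for all $p\in P$. $(S,\preceq)$ is a cc sponge if every nonempty right-bounded subset has a join. A function $h:S\to\mathbb{R}$ is a discriminator if for every $\varepsilon>0$ there is $\delta>0$ such that for all $x,y\in S$, $x\preceq y$ and $h(y)<h(x)+\delta$ imply $d(x,y)<\varepsilon$. *)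

theory Defs
  imports "HOL-Analysis.Analysis"
begin

definition orientation :: "('a \<Rightarrow> 'a \<Rightarrow> bool) \<Rightarrow> bool" where
  "orientation le \<longleftrightarrow> (\<forall>x. le x x) \<and> (\<forall>x y. le x y \<and> le y x \<longrightarrow> x = y)"

definition topological_orientation :: "('a::topological_space \<Rightarrow> 'a \<Rightarrow> bool) \<Rightarrow> bool" where
  "topological_orientation le \<longleftrightarrow> orientation le \<and> closed {(x, y). le x y}"

definition right_bounded :: "('a \<Rightarrow> 'a \<Rightarrow> bool) \<Rightarrow> 'a set \<Rightarrow> bool" where
  "right_bounded le P \<longleftrightarrow> (\<exists>s. \<forall>p\<in>P. le p s)"

definition is_join :: "('a \<Rightarrow> 'a \<Rightarrow> bool) \<Rightarrow> 'a set \<Rightarrow> 'a \<Rightarrow> bool" where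
  "is_join le P x \<longleftrightarrow> (\<forall>p\<in>P. le p x) \<and> (\<forall>y. (\<forall>p\<in>P. le p y) \<longrightarrow> le x y)"

definition cc_sponge :: "('a \<Rightarrow> 'a \<Rightarrow> bool) \<Rightarrow> bool" where
  "cc_sponge le \<longleftrightarrow> orientation le \<and>
     (\<forall>P. P \<noteq> {} \<and> right_bounded le P \<longrightarrow> (\<exists>x. is_join le P x))"

definition discriminator :: "('a::metric_space \<Rightarrow> 'a \<Rightarrow> bool) \<Rightarrow> ('a \<Rightarrow> real) \<Rightarrow> bool" where
  "discriminator le h \<longleftrightarrow> (\<forall>\<epsilon>>0. \<exists>\<delta>>0. \<forall>x y. le x y \<and> h y < h x + \<delta> \<longrightarrow> dist x y < \<epsilon>)"

end

theory Submission
  imports Defs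
begin

lemma disc_eq:
  fixes le :: "'a::metric_space \<Rightarrow> 'a \<Rightarrow> bool"
  assumes "discriminator le h" "le x z" "h z \<le> h x"
  shows "x = z"
proof -
  have "\<forall>e>0. dist x z < e"
  proof (intro allI impI)
    fix e :: real assume "e > 0"
    then obtain d where "d > 0" "\<forall>x y. le x y \<and> h y < h x + d \<longrightarrow> dist x y < e"
      using assms(1) unfolding discriminator_def by blast
    moreover have "h z < h x + d" using assms(3) \<open>d > 0\<close> by linarith
    ultimately show "dist x z < e" using assms(2) by blast
  qed
  show ?thesis
  proof (rule ccontr)
    assume "x \<noteq> z"
    then have "dist x z > 0" by simp
    with \<open>\<forall>e>0. dist x z < e\<close> have "dist x z < dist x z" by blast
    then show False by simp
  qed
qed

lemma disc_mono:
  fixes le :: "'a::metric_space \<Rightarrow> 'a \<Rightarrow> bool"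
  assumes "discriminator le h" "le x z"
  shows "h x \<le> h z"
proof (rule ccontr)
  assume "\<not> h x \<le> h z"
  then have "x = z" using disc_eq[OF assms] by simp
  then show False using \<open>\<not> h x \<le> h z\<close> by simp
qed

lemma aux_ineq:
  fixes a b M y d z :: real
  shows "a \<le> b \<Longrightarrow> z \<le> M \<Longrightarrow> M - a < y \<Longrightarrow> b < d \<Longrightarrow> z < y + d"
  by linarith

lemma aux_ineq2:
  fixes a b c e :: real
  shows "a \<le> b + c \<Longrightarrow> b < e/2 \<Longrightarrow> c < e/2 \<Longrightarrow> a < e"
  by linarith

theorem mainTheorem4:
  fixes le :: "'a::complete_space \<Rightarrow> 'a \<Rightarrow> bool"
    and h :: "'a \<Rightarrow> real"
  assumes "topological_orientation le"
    and "\<And>a b. right_bounded le {a, b} \<Longrightarrow> \<exists>x. is_join le {a, b} x"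
    and "continuous_on UNIV h"
    and "discriminator le h"
  shows "cc_sponge le"
proof -
  have ori: "orientation le" and cl: "closed {(x, y). le x y}"
    using assms(1) unfolding topological_orientation_def by auto
  have refl: "\<And>x. le x x" using ori unfolding orientation_def by auto
  have "\<exists>x. is_join le P x" if Pne: "P \<noteq> {}" and rb: "right_bounded le P" for P
  proof -
    define U where "U = {s. \<forall>p\<in>P. le p s}"
    define L where "L = {x. \<forall>u\<in>U. le x u}"
    obtain u0 where u0: "u0 \<in> U" using rb unfolding right_bounded_def U_def by auto
    have PL: "P \<subseteq> L" unfolding L_def U_def by auto
    have Lne: "L \<noteq> {}" using PL Pne by auto
    have joinL: "\<exists>j\<in>L. le a j \<and> le b j" if "a \<in> L" "b \<in> L" for a b
    proof -
      have "right_bounded le {a, b}" unfolding right_bounded_def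
        using that u0 unfolding L_def by auto
      then obtain j where j: "is_join le {a, b} j" using assms(2) by blast
      have "j \<in> L" unfolding L_def
      proof (intro CollectI ballI)
        fix u assume "u \<in> U"
        then have "le a u" "le b u" using that unfolding L_def by auto
        then show "le j u" using j unfolding is_join_def by auto
      qed
      then show ?thesis using j unfolding is_join_def by auto
    qed
    have hbd: "h x \<le> h u0" if "x \<in> L" for x
      using disc_mono[OF assms(4)] that u0 unfolding L_def by auto
    define M where "M = Sup (h ` L)"
    have bdd: "bdd_above (h ` L)" using hbd by (intro bdd_aboveI[where M="h u0"]) auto
    have hM: "h x \<le> M" if "x \<in> L" for x
      unfolding M_def using bdd that by (simp add: cSup_upper)
    have "\<exists>x\<in>L. M - inverse (real (Suc n)) < h x" for n
    proof -
      have "M - inverse (real (Suc n)) < M" by simp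
      then have "\<exists>y\<in>h ` L. M - inverse (real (Suc n)) < y"
        unfolding M_def using less_cSup_iff[OF _ bdd] Lne by blast
      then show ?thesis by blast
    qed
    then have "\<forall>n. \<exists>x. x \<in> L \<and> M - inverse (real (Suc n)) < h x" by blast
    then have "\<exists>X. \<forall>n. X n \<in> L \<and> M - inverse (real (Suc n)) < h (X n)" by (rule choice)
    then obtain X where X0: "\<forall>n. X n \<in> L \<and> M - inverse (real (Suc n)) < h (X n)" by blast
    then have X: "\<And>n. X n \<in> L" "\<And>n. M - inverse (real (Suc n)) < h (X n)" by auto
    have "Cauchy X"
      unfolding Cauchy_def
    proof (intro allI impI)
      fix e :: real assume "e > 0"
      then have e2: "e/2 > 0" by simp
      obtain d where d: "d > 0" "\<forall>x y. le x y \<and> h y < h x + d \<longrightarrow> dist x y < e/2"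
        using assms(4) e2 unfolding discriminator_def by blast
      obtain N where N: "inverse (real (Suc N)) < d"
        using reals_Archimedean[OF d(1)] by blast
      have "dist (X m) (X n) < e" if "m \<ge> N" "n \<ge> N" for m n
      proof -
        obtain z where z: "z \<in> L" "le (X m) z" "le (X n) z" using joinL[OF X(1)[of m] X(1)[of n]] by blast
        have close: "dist (X k) z < e/2" if "k \<ge> N" "le (X k) z" for k
        proof -
          have "inverse (real (Suc k)) \<le> inverse (real (Suc N))"
            using \<open>k \<ge> N\<close> by (intro le_imp_inverse_le) auto
          then have "h z < h (X k) + d" using hM[OF z(1)] X(2)[of k] N by (rule aux_ineq)
          then show ?thesis using d(2)[rule_format, OF conjI[OF that(2)]] by blast
        qed
        have "dist (X m) (X n) \<le> dist (X m) z + dist (X n) z" by (rule dist_triangle2)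
        moreover have c1: "dist (X m) z < e/2" using close that(1) z(2) by blast
        moreover have c2: "dist (X n) z < e/2" using close that(2) z(3) by blast
        ultimately show ?thesis by (rule aux_ineq2)
      qed
      then show "\<exists>N. \<forall>m\<ge>N. \<forall>n\<ge>N. dist (X m) (X n) < e" by blast
    qed
    then obtain x where lim: "X \<longlonglongrightarrow> x" using Cauchy_convergent_iff convergent_def by blast
    have xL: "x \<in> L" unfolding L_def
    proof (intro CollectI ballI)
      fix u assume "u \<in> U"
      have t: "(\<lambda>n. (X n, u)) \<longlonglongrightarrow> (x, u)" by (rule tendsto_Pair[OF lim tendsto_const])
      have m: "\<And>n. (X n, u) \<in> {(x, y). le x y}" using X(1) \<open>u \<in> U\<close> unfolding L_def by auto
      have "(x, u) \<in> {(x, y). le x y}" by (rule closed_sequentially[OF cl m t])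
      then show "le x u" by simp
    qed
    have limh: "(\<lambda>n. h (X n)) \<longlonglongrightarrow> h x"
      using continuous_on_tendsto_compose[OF assms(3) lim] by simp
    have limM: "(\<lambda>n. M - inverse (real (Suc n))) \<longlonglongrightarrow> M - 0"
      by (intro tendsto_intros LIMSEQ_inverse_real_of_nat)
    have evle: "\<exists>N. \<forall>n\<ge>N. M - inverse (real (Suc n)) \<le> h (X n)"
      using X(2) less_imp_le by blast
    have "M - 0 \<le> h x" using LIMSEQ_le[OF limM limh evle] .
    then have hx: "M \<le> h x" by simp
    have top: "le y x" if "y \<in> L" for y
    proof -
      obtain z where z: "z \<in> L" "le x z" "le y z" using joinL[OF xL \<open>y \<in> L\<close>] by blast
      have "h z \<le> h x" using hM[OF z(1)] hx by linarith
      then have "x = z" by (rule disc_eq[OF assms(4) z(2)])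
      then show ?thesis using z by simp
    qed
    have "is_join le P x" unfolding is_join_def
    proof (intro conjI allI impI ballI)
      fix p assume "p \<in> P" then show "le p x" using top PL by auto
    next
      fix y assume "\<forall>p\<in>P. le p y"
      then have "y \<in> U" unfolding U_def by auto
      then show "le x y" using xL unfolding L_def by auto
    qed
    then show ?thesis by blast
  qed
  then show ?thesis unfolding cc_sponge_def using ori by blast
qed

end
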